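(* Let $G$ be a graph, $k\in\mathbb N$, and let $\mathcal F$ be a set of stars in $\vec S_k(G)$ all of which have finite interior. Let $X$ be a critical vertex set of $G$ with $|X|\ge k$. Then $\tau:=\{(A,B)\in\vec S_k(G): X\subseteq B\}$ is a principal $\mathcal F$-tangle of $S_k(G)$. In particular, if $\sigma\subseteq\vec S_k(G)$ is a star with $X\subseteq\mathrm{int}(\sigma)$, then $\sigma\subseteq\tau$.
   Context: Graphs may be infinite. A separation of $G$ is a set $\{A,B\}$ with $A,B\subseteq V(G)$, $A\cup B=V(G)$ and no edge of $G$ between $A\setminus B$ and $B\setminus A$; its order is $|A\cap B|$. $S_k(G)$ is the set of separations of order $<k$ and $\vec S_k(G)$ the set of their orientations $(A,B)$, $(B,A)$. Order: $(A,B)\le(C,D)$ iff $A\subseteq C$ and $B\supseteq D$. An orientation of $S_k(G)$ is a set containing exactly one orientation of each element; consistent if there are no distinct $\{A,B\},\{C,D\}\in S_k(G)$ with $(A,B)<(C,D)$, $(B,A)\in O$, $(C,D)\in O$; principal if for every set $Y$ of fewer than $k$ vertices it contains $(V(G)\setminus V(K),V(K)\cup Y)$ for some component $K$ of $G-Y$. A star is a set $\sigma$ of oriented finite-order separations, not containing $(V(G),V(G))$, with $(A,B)\le(D,C)$ for distinct $(A,B),(C,D)\in\sigma$; its interior is $\mathrm{int}(\sigma)=\bigcap_{(A,B)\in\sigma}B$. An $\mathcal F$-tangle of $S_k(G)$ is a consistent orientation of $S_k(G)$ having no element of $\mathcal F$ as a subset. A critical vertex set of $G$ is a finite set $X\subseteq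 V(G)$ such that infinitely many components $K$ of $G-X$ satisfy $N_G(K)=X$. *)

theory Defs
  imports Main
begin

definition graph :: "'v set \<Rightarrow> ('v \<Rightarrow> 'v \<Rightarrow> bool) \<Rightarrow> bool" where
  "graph V E \<longleftrightarrow> (\<forall>x y. E x y \<longrightarrow> E y x \<and> x \<noteq> y \<and> x \<in> V \<and> y \<in> V)"

definition component :: "'v set \<Rightarrow> ('v \<Rightarrow> 'v \<Rightarrow> bool) \<Rightarrow> 'v set \<Rightarrow> 'v set \<Rightarrow> bool" where
  "component V E Y K \<longleftrightarrow>
     (\<exists>x \<in> V - Y. K = {y. (\<lambda>a b. E a b \<and> a \<notin> Y \<and> b \<notin> Y)\<^sup>*\<^sup>* x y})"

definition nbhd :: "('v \<Rightarrow> 'v \<Rightarrow> bool) \<Rightarrow> 'v set \<Rightarrow> 'v set" where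
  "nbhd E K = {y. y \<notin> K \<and> (\<exists>x \<in> K. E x y)}"

definition is_sep :: "'v set \<Rightarrow> ('v \<Rightarrow> 'v \<Rightarrow> bool) \<Rightarrow> 'v set \<Rightarrow> 'v set \<Rightarrow> bool" where
  "is_sep V E A B \<longleftrightarrow> A \<subseteq> V \<and> B \<subseteq> V \<and> A \<union> B = V \<and>
     \<not> (\<exists>x \<in> A - B. \<exists>y \<in> B - A. E x y)"

text \<open>Oriented separations of order < k (the order is the cardinality of A \<inter> B,
which must therefore be finite).\<close>

definition vecS :: "nat \<Rightarrow> 'v set \<Rightarrow> ('v \<Rightarrow> 'v \<Rightarrow> bool) \<Rightarrow> ('v set \<times> 'v set) set" where
  "vecS k V E = {(A, B). is_sep V E A B \<and> finite (A \<inter> B) \<and> card (A \<inter> B) < k}"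

definition sep_le :: "'v set \<times> 'v set \<Rightarrow> 'v set \<times> 'v set \<Rightarrow> bool" where
  "sep_le s t \<longleftrightarrow> fst s \<subseteq> fst t \<and> snd t \<subseteq> snd s"

definition sep_less :: "'v set \<times> 'v set \<Rightarrow> 'v set \<times> 'v set \<Rightarrow> bool" where
  "sep_less s t \<longleftrightarrow> sep_le s t \<and> s \<noteq> t"

definition orientation :: "nat \<Rightarrow> 'v set \<Rightarrow> ('v \<Rightarrow> 'v \<Rightarrow> bool) \<Rightarrow> ('v set \<times> 'v set) set \<Rightarrow> bool" where
  "orientation k V E Ori \<longleftrightarrow> Ori \<subseteq> vecS k V E \<and>
     (\<forall>(A, B) \<in> vecS k V E. ((A, B) \<in> Ori \<or> (B, A) \<in> Ori) \<and>
        ((A, B) \<in> Ori \<and> (B, A) \<in> Ori \<longrightarrow> A = B))"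

definition consistent :: "nat \<Rightarrow> 'v set \<Rightarrow> ('v \<Rightarrow> 'v \<Rightarrow> bool) \<Rightarrow> ('v set \<times> 'v set) set \<Rightarrow> bool" where
  "consistent k V E Ori \<longleftrightarrow>
     \<not> (\<exists>A B C D. (A, B) \<in> vecS k V E \<and> (C, D) \<in> vecS k V E \<and> {A, B} \<noteq> {C, D} \<and>
          sep_less (A, B) (C, D) \<and> (B, A) \<in> Ori \<and> (C, D) \<in> Ori)"

definition principal :: "nat \<Rightarrow> 'v set \<Rightarrow> ('v \<Rightarrow> 'v \<Rightarrow> bool) \<Rightarrow> ('v set \<times> 'v set) set \<Rightarrow> bool" where
  "principal k V E Ori \<longleftrightarrow>
     (\<forall>Y. Y \<subseteq> V \<and> finite Y \<and> card Y < k \<longrightarrow>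
        (\<exists>K. component V E Y K \<and> (V - K, K \<union> Y) \<in> Ori))"

definition star :: "'v set \<Rightarrow> ('v \<Rightarrow> 'v \<Rightarrow> bool) \<Rightarrow> ('v set \<times> 'v set) set \<Rightarrow> bool" where
  "star V E \<sigma> \<longleftrightarrow>
     (\<forall>(A, B) \<in> \<sigma>. is_sep V E A B \<and> finite (A \<inter> B)) \<and> (V, V) \<notin> \<sigma> \<and>
     (\<forall>A B C D. (A, B) \<in> \<sigma> \<and> (C, D) \<in> \<sigma> \<and> (A, B) \<noteq> (C, D) \<longrightarrow> sep_le (A, B) (D, C))"

definition interior :: "'v set \<Rightarrow> ('v set \<times> 'v set) set \<Rightarrow> 'v set" where
  "interior V \<sigma> = V \<inter> (\<Inter>(A, B) \<in> \<sigma>. B)"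

definition F_tangle :: "nat \<Rightarrow> 'v set \<Rightarrow> ('v \<Rightarrow> 'v \<Rightarrow> bool) \<Rightarrow> ('v set \<times> 'v set) set set
     \<Rightarrow> ('v set \<times> 'v set) set \<Rightarrow> bool" where
  "F_tangle k V E \<F> Ori \<longleftrightarrow> orientation k V E Ori \<and> consistent k V E Ori \<and>
     (\<forall>\<sigma> \<in> \<F>. \<not> \<sigma> \<subseteq> Ori)"

definition critical :: "'v set \<Rightarrow> ('v \<Rightarrow> 'v \<Rightarrow> bool) \<Rightarrow> 'v set \<Rightarrow> bool" where
  "critical V E X \<longleftrightarrow> finite X \<and> X \<subseteq> V \<and>
     infinite {K. component V E X K \<and> nbhd E K = X}"

end

theory Submission
  imports Defs
begin

definition RY :: "('v \<Rightarrow> 'v \<Rightarrow> bool) \<Rightarrow> 'v set \<Rightarrow> 'v \<Rightarrow> 'v \<Rightarrow> bool" where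
  "RY E Y = (\<lambda>a b. E a b \<and> a \<notin> Y \<and> b \<notin> Y)"

lemma comp_RY: "component V E Y K \<longleftrightarrow> (\<exists>x \<in> V - Y. K = {y. (RY E Y)\<^sup>*\<^sup>* x y})"
  unfolding component_def RY_def by simp

lemma RY_sym: "graph V E \<Longrightarrow> (RY E Y)\<^sup>*\<^sup>* a b \<Longrightarrow> (RY E Y)\<^sup>*\<^sup>* b a"
proof -
  assume g: "graph V E" and r: "(RY E Y)\<^sup>*\<^sup>* a b"
  have "symp (RY E Y)" using g unfolding symp_def RY_def graph_def by blast
  hence "symp (RY E Y)\<^sup>*\<^sup>*" by (rule symp_rtranclp)
  thus ?thesis using r by (blast dest: sympD)
qed

lemma RY_in: assumes "graph V E" "(RY E Y)\<^sup>*\<^sup>* x y" "x \<in> V - Y" shows "y \<in> V - Y"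
  using assms(2,3) by (induction rule: rtranclp_induct) (use assms(1) in \<open>auto simp: RY_def graph_def\<close>)

lemma comp_sub: "graph V E \<Longrightarrow> component V E Y K \<Longrightarrow> K \<subseteq> V - Y"
  unfolding comp_RY using RY_in by fastforce

lemma comp_ne: "component V E Y K \<Longrightarrow> K \<noteq> {}"
  unfolding comp_RY by auto

lemma comp_eq: "graph V E \<Longrightarrow> component V E Y K1 \<Longrightarrow> component V E Y K2 \<Longrightarrow> z \<in> K1 \<Longrightarrow> z \<in> K2
   \<Longrightarrow> K1 = K2"
proof -
  assume g: "graph V E" and c1: "component V E Y K1" and c2: "component V E Y K2"
    and z1: "z \<in> K1" and z2: "z \<in> K2"
  obtain x1 where x1: "K1 = {y. (RY E Y)\<^sup>*\<^sup>* x1 y}" using c1 unfolding comp_RY by auto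
  obtain x2 where x2: "K2 = {y. (RY E Y)\<^sup>*\<^sup>* x2 y}" using c2 unfolding comp_RY by auto
  have a: "(RY E Y)\<^sup>*\<^sup>* x1 z" "(RY E Y)\<^sup>*\<^sup>* x2 z" using z1 z2 x1 x2 by auto
  have "(RY E Y)\<^sup>*\<^sup>* x1 x2" using a(1) RY_sym[OF g a(2)] by auto
  moreover have "(RY E Y)\<^sup>*\<^sup>* x2 x1" using a(2) RY_sym[OF g a(1)] by auto
  ultimately show ?thesis using x1 x2 by (auto intro: rtranclp_trans)
qed

lemma finite_meet:
  assumes g: "graph V E" and S: "finite S"
  shows "finite {K. component V E Y K \<and> K \<inter> S \<noteq> {}}"
proof -
  let ?Q = "{K. component V E Y K \<and> K \<inter> S \<noteq> {}}"
  define f where "f K = (SOME z. z \<in> K \<inter> S)" for K :: "'a set"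
  have f: "K \<in> ?Q \<Longrightarrow> f K \<in> K \<inter> S" for K
    unfolding f_def by (rule someI_ex) auto
  have "inj_on f ?Q"
  proof (rule inj_onI)
    fix K1 K2 assume "K1 \<in> ?Q" "K2 \<in> ?Q" "f K1 = f K2"
    thus "K1 = K2" using f[of K1] f[of K2] comp_eq[OF g, of Y K1 K2 "f K1"] by auto
  qed
  moreover have "f ` ?Q \<subseteq> S" using f by auto
  ultimately show ?thesis using S finite_imageD finite_subset by metis
qed

lemma crit_avoid:
  assumes g: "graph V E" and c: "critical V E X" and S: "finite S"
  shows "\<exists>K. component V E X K \<and> nbhd E K = X \<and> K \<inter> S = {}"
proof -
  have "infinite ({K. component V E X K \<and> nbhd E K = X} - {K. component V E X K \<and> K \<inter> S \<noteq> {}})"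
    using c finite_meet[OF g S, of X] unfolding critical_def by (meson Diff_infinite_finite)
  hence "({K. component V E X K \<and> nbhd E K = X} - {K. component V E X K \<and> K \<inter> S \<noteq> {}}) \<noteq> {}"
    by (metis finite.emptyI)
  thus ?thesis by auto
qed

lemma comp_side0:
  assumes g: "graph V E" and s: "is_sep V E A B"
    and r: "(RY E Y)\<^sup>*\<^sup>* x0 y" and d: "{y. (RY E Y)\<^sup>*\<^sup>* x0 y} \<inter> (A \<inter> B) = {}"
    and x0: "x0 \<in> A - B"
  shows "y \<in> A - B"
  using r
proof (induction rule: rtranclp_induct)
  case base thus ?case using x0 .
next
  case (step y z)
  have "(RY E Y)\<^sup>*\<^sup>* x0 z" using step(1,2) by auto
  hence "z \<notin> A \<inter> B" using d by auto
  moreover have "z \<in> V" using g step(2) unfolding RY_def graph_def by auto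
  moreover have "E y z" using step(2) unfolding RY_def by auto
  ultimately show ?case using s step(3) unfolding is_sep_def by blast
qed

lemma is_sep_sym: "graph V E \<Longrightarrow> is_sep V E A B \<Longrightarrow> is_sep V E B A"
  unfolding is_sep_def graph_def by blast

lemma comp_side:
  assumes g: "graph V E" and s: "is_sep V E A B" and c: "component V E Y K"
    and d: "K \<inter> (A \<inter> B) = {}"
  shows "K \<subseteq> A - B \<or> K \<subseteq> B - A"
proof -
  obtain x0 where x0: "x0 \<in> V - Y" and K: "K = {y. (RY E Y)\<^sup>*\<^sup>* x0 y}" using c unfolding comp_RY by auto
  have "x0 \<in> K" using K by auto
  hence "x0 \<in> A - B \<or> x0 \<in> B - A" using d x0 s unfolding is_sep_def by auto
  thus ?thesis
  proof
    assume "x0 \<in> A - B" thus ?thesis using comp_side0[OF g s _ _] d K by blast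
  next
    assume "x0 \<in> B - A" thus ?thesis using comp_side0[OF g is_sep_sym[OF g s] _ _] d K by blast
  qed
qed

lemma nbhd_side: "graph V E \<Longrightarrow> is_sep V E A B \<Longrightarrow> K \<subseteq> A - B \<Longrightarrow> nbhd E K \<subseteq> A"
  unfolding nbhd_def is_sep_def graph_def by blast

lemma card_contra:
  assumes "finite (A \<inter> B)" "card (A \<inter> B) < k" "k \<le> card X" "X \<subseteq> A" "X \<subseteq> B"
  shows False
proof -
  have "card X \<le> card (A \<inter> B)" using assms by (intro card_mono) auto
  thus False using assms by auto
qed

lemma side_X:
  assumes g: "graph V E" and c: "critical V E X" and kX: "k \<le> card X"
    and AB: "(A, B) \<in> vecS k V E"
  shows "X \<subseteq> A \<or> X \<subseteq> B"
proof -
  have s: "is_sep V E A B" and f: "finite (A \<inter> B)" using AB unfolding vecS_def by auto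
  obtain K where K: "component V E X K" "nbhd E K = X" "K \<inter> (A \<inter> B) = {}"
    using crit_avoid[OF g c f] by blast
  from comp_side[OF g s K(1) K(3)] show ?thesis
    using nbhd_side[OF g s] nbhd_side[OF g is_sep_sym[OF g s]] K(2) by blast
qed

lemma RY_transfer:
  assumes r: "(RY E X)\<^sup>*\<^sup>* c1 y" and d: "{y. (RY E X)\<^sup>*\<^sup>* c1 y} \<inter> Y = {}"
  shows "(RY E Y)\<^sup>*\<^sup>* c1 y"
  using r
proof (induction rule: rtranclp_induct)
  case base thus ?case by simp
next
  case (step y z)
  have "(RY E X)\<^sup>*\<^sup>* c1 z" using step(1,2) by auto
  hence "z \<notin> Y" "y \<notin> Y" using d step(1) by auto
  hence "RY E Y y z" using step(2) unfolding RY_def by auto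
  thus ?case using step(3) by auto
qed

theorem lemma3p7:
  fixes V :: "'v set" and E :: "'v \<Rightarrow> 'v \<Rightarrow> bool" and k :: nat
    and \<F> :: "('v set \<times> 'v set) set set" and X :: "'v set"
  assumes "graph V E"
    and "\<forall>\<sigma> \<in> \<F>. star V E \<sigma> \<and> \<sigma> \<subseteq> vecS k V E \<and> finite (interior V \<sigma>)"
    and "critical V E X"
    and "card X \<ge> k"
  shows "F_tangle k V E \<F> {(A, B) \<in> vecS k V E. X \<subseteq> B}
       \<and> principal k V E {(A, B) \<in> vecS k V E. X \<subseteq> B}
       \<and> (\<forall>\<sigma>. star V E \<sigma> \<and> \<sigma> \<subseteq> vecS k V E \<and> X \<subseteq> interior V \<sigma>
              \<longrightarrow> \<sigma> \<subseteq> {(A, B) \<in> vecS k V E. X \<subseteq> B})"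
proof -
  note g = assms(1) and c = assms(3) and kX = assms(4)
  let ?T = "{(A, B) \<in> vecS k V E. X \<subseteq> B}"
  have XV: "X \<subseteq> V" and fX: "finite X" using c unfolding critical_def by auto
  have vsym: "(B, A) \<in> vecS k V E" if "(A, B) \<in> vecS k V E" for A B
    using that is_sep_sym[OF g] unfolding vecS_def by (auto simp: Int_commute)
  have ori: "orientation k V E ?T"
    unfolding orientation_def
  proof (intro conjI ballI)
    show "?T \<subseteq> vecS k V E" by auto
  next
    fix p assume p: "p \<in> vecS k V E"
    obtain A B where pAB: "p = (A, B)" by (cases p)
    have "X \<subseteq> A \<or> X \<subseteq> B" using side_X[OF g c kX] p pAB by auto
    moreover have "\<not> (X \<subseteq> A \<and> X \<subseteq> B)"
      using card_contra[of A B k X] p pAB kX unfolding vecS_def by auto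
    ultimately show "case p of (A, B) \<Rightarrow> ((A, B) \<in> ?T \<or> (B, A) \<in> ?T) \<and>
        ((A, B) \<in> ?T \<and> (B, A) \<in> ?T \<longrightarrow> A = B)"
      using p pAB vsym by auto
  qed
  have cons: "consistent k V E ?T"
    unfolding consistent_def
  proof
    assume "\<exists>A B C D. (A, B) \<in> vecS k V E \<and> (C, D) \<in> vecS k V E \<and> {A, B} \<noteq> {C, D} \<and>
          sep_less (A, B) (C, D) \<and> (B, A) \<in> ?T \<and> (C, D) \<in> ?T"
    then obtain A B C D where h: "(C, D) \<in> vecS k V E" "sep_less (A, B) (C, D)" "X \<subseteq> A" "X \<subseteq> D"
      by auto
    have "X \<subseteq> C" using h(2,3) unfolding sep_less_def sep_le_def by auto
    thus False using card_contra[of C D k X] h kX unfolding vecS_def by auto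
  qed
  have Fav: "\<not> \<sigma> \<subseteq> ?T" if sF: "\<sigma> \<in> \<F>" for \<sigma>
  proof
    assume sT: "\<sigma> \<subseteq> ?T"
    have st: "star V E \<sigma>" and sv: "\<sigma> \<subseteq> vecS k V E" and fi: "finite (interior V \<sigma>)"
      using assms(2) sF by auto
    obtain K where K: "component V E X K" "nbhd E K = X" "K \<inter> interior V \<sigma> = {}"
      using crit_avoid[OF g c fi] by blast
    obtain v where v: "v \<in> K" using comp_ne[OF K(1)] by auto
    have vV: "v \<in> V" using comp_sub[OF g K(1)] v by auto
    have "v \<notin> interior V \<sigma>" using K(3) v by auto
    then obtain A B where AB: "(A, B) \<in> \<sigma>" "v \<notin> B" using vV unfolding interior_def by auto
    have s: "is_sep V E A B" and fAB: "finite (A \<inter> B)" "card (A \<inter> B) < k"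
      using sv AB(1) unfolding vecS_def by auto
    have "v \<in> A" using s vV AB(2) unfolding is_sep_def by auto
    have "A \<inter> B \<subseteq> interior V \<sigma>"
    proof
      fix w assume w: "w \<in> A \<inter> B"
      have "w \<in> V" using w s unfolding is_sep_def by auto
      moreover have "w \<in> D" if "(C, D) \<in> \<sigma>" for C D
      proof (cases "(C, D) = (A, B)")
        case True thus ?thesis using w by auto
      next
        case False
        hence "sep_le (A, B) (D, C)" using st AB(1) that unfolding star_def by blast
        thus ?thesis using w unfolding sep_le_def by auto
      qed
      ultimately show "w \<in> interior V \<sigma>" unfolding interior_def by auto
    qed
    hence "K \<inter> (A \<inter> B) = {}" using K(3) by auto
    from comp_side[OF g s K(1) this] have "K \<subseteq> A - B" using v \<open>v \<in> A\<close> AB(2) by auto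
    hence "X \<subseteq> A" using nbhd_side[OF g s] K(2) by auto
    moreover have "X \<subseteq> B" using sT AB(1) by auto
    ultimately show False using card_contra[OF fAB kX] by auto
  qed
  have princ: "principal k V E ?T"
    unfolding principal_def
  proof (intro allI impI)
    fix Y assume Y: "Y \<subseteq> V \<and> finite Y \<and> card Y < k"
    have "\<not> X \<subseteq> Y"
    proof
      assume "X \<subseteq> Y" hence "card X \<le> card Y" using Y card_mono by auto
      thus False using Y kX by auto
    qed
    then obtain x where x: "x \<in> X" "x \<notin> Y" by auto
    obtain C where C: "component V E X C" "nbhd E C = X" "C \<inter> Y = {}"
      using crit_avoid[OF g c, of Y] Y by blast
    obtain c1 where c1: "C = {y. (RY E X)\<^sup>*\<^sup>* c1 y}" using C(1) unfolding comp_RY by auto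
    have CX: "C \<subseteq> V - X" using comp_sub[OF g C(1)] .
    define K where "K = {y. (RY E Y)\<^sup>*\<^sup>* x y}"
    have xV: "x \<in> V - Y" using x XV by auto
    have Kc: "component V E Y K" unfolding comp_RY K_def using xV by auto
    have KY: "K \<subseteq> V - Y" using comp_sub[OF g Kc] .
    have inC: "(RY E Y)\<^sup>*\<^sup>* c1 y" if "y \<in> C" for y
      using RY_transfer[of E X c1 y Y] that c1 C(3) by auto
    have XK: "X \<subseteq> K \<union> Y"
    proof
      fix x' assume x': "x' \<in> X"
      show "x' \<in> K \<union> Y"
      proof (cases "x' \<in> Y")
        case False
        obtain c0 where c0: "c0 \<in> C" "E c0 x" using C(2) x(1) unfolding nbhd_def by auto
        obtain c' where c': "c' \<in> C" "E c' x'" using C(2) x' unfolding nbhd_def by auto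
        have "(RY E Y)\<^sup>*\<^sup>* x c0" using c0 g C(3) x(2) unfolding RY_def graph_def by auto
        moreover have "(RY E Y)\<^sup>*\<^sup>* c0 c1" using RY_sym[OF g inC[OF c0(1)]] .
        moreover have "(RY E Y)\<^sup>*\<^sup>* c1 c'" using inC[OF c'(1)] .
        moreover have "(RY E Y)\<^sup>*\<^sup>* c' x'" using c' C(3) False unfolding RY_def by auto
        ultimately have "(RY E Y)\<^sup>*\<^sup>* x x'" by (meson rtranclp_trans)
        thus ?thesis unfolding K_def by auto
      qed auto
    qed
    have sep: "is_sep V E (V - K) (K \<union> Y)"
      unfolding is_sep_def
    proof (intro conjI)
      show "\<not> (\<exists>u \<in> (V - K) - (K \<union> Y). \<exists>w \<in> (K \<union> Y) - (V - K). E u w)"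
      proof
        assume "\<exists>u \<in> (V - K) - (K \<union> Y). \<exists>w \<in> (K \<union> Y) - (V - K). E u w"
        then obtain u w where uw: "u \<notin> K" "u \<notin> Y" "w \<in> K" "E u w" using Y by blast
        have "w \<notin> Y" using uw(3) KY by auto
        hence "RY E Y w u" using uw g unfolding RY_def graph_def by auto
        hence "u \<in> K" using uw(3) unfolding K_def by auto
        thus False using uw(1) by auto
      qed
    qed (use KY Y in auto)
    have "(V - K) \<inter> (K \<union> Y) \<subseteq> Y" by auto
    hence "finite ((V - K) \<inter> (K \<union> Y))" "card ((V - K) \<inter> (K \<union> Y)) < k"
      using Y finite_subset card_mono le_less_trans by (metis, metis)
    hence "(V - K, K \<union> Y) \<in> ?T" using sep XK unfolding vecS_def by auto
    thus "\<exists>K. component V E Y K \<and> (V - K, K \<union> Y) \<in> ?T" using Kc by blast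
  qed
  have last: "\<forall>\<sigma>. star V E \<sigma> \<and> \<sigma> \<subseteq> vecS k V E \<and> X \<subseteq> interior V \<sigma> \<longrightarrow> \<sigma> \<subseteq> ?T"
  proof (intro allI impI subsetI)
    fix \<sigma> p assume h: "star V E \<sigma> \<and> \<sigma> \<subseteq> vecS k V E \<and> X \<subseteq> interior V \<sigma>" and p: "p \<in> \<sigma>"
    obtain A B where pAB: "p = (A, B)" by (cases p)
    have "X \<subseteq> B"
    proof
      fix x assume "x \<in> X"
      hence "x \<in> (\<Inter>(A, B) \<in> \<sigma>. B)" using h unfolding interior_def by blast
      hence "x \<in> (case p of (A, B) \<Rightarrow> B)" using p by (rule INT_D)
      thus "x \<in> B" using pAB by simp
    qed
    thus "p \<in> ?T" using h p pAB by auto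
  qed
  show ?thesis using ori cons Fav princ last unfolding F_tangle_def by blast
qed

end
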